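(* For $k\ge2$, let $\mathrm{SCHF}[2^k]$ denote the recursive spherical codes by Hopf foliations in dimension $2^k$ (see context), with cardinalities $M(2^k,d)$. Then the asymptotic center density $$\overline{\Delta}_c(\mathrm{SCHF}[2^k])=\lim_{d\to0}\frac{M(2^k,d)}{\mathbb{S}_{2^k}}\left(\frac d2\right)^{2^k-1}$$ equals $2^{\,1-3\cdot2^{k-2}}\,3^{-2^{k-3}}$.
   Context: $\mathbb{S}_m=\frac{m\pi^{m/2}}{\Gamma(1+m/2)}$ is the surface area of the unit sphere $S^{m-1}\subset\mathbb{R}^m$. Base case $\mathrm{SCHF}[4]$: for $d\in(0,2]$, with $\Delta\eta=2\arcsin(d/2)$, $t=\lfloor\pi/(4\arcsin(d/2))\rfloor$, $\eta_i=\pi/4+i\Delta\eta$ ($0\le i\le\lfloor t/2\rfloor$), $m(d,\eta)=\lfloor\pi/\arcsin(d/(2\cos\eta))\rfloor$ if $d\le2\cos\eta$ and $1$ otherwise, $n(d,\eta)=\max(2\lfloor\min\{n_1,n_2\}/2\rfloor,1)$ with $n_1=\lfloor\pi/\arcsin[((d^2/4)\csc^2\eta-\cot^2\eta\sin^2(\pi/2m))^{1/2}]\rfloor$ ($m=m(d,\eta)$) and $n_2=\lfloor2\pi/\arcsin(d/(2\sin\eta))\rfloor$ if $d\le2\sin\eta$, $1$ otherwise, the code consists of the points $(e^{\mathbf{i}(2\pi j/m_i+\pi k/m_i)}\cos\eta_i,e^{\mathbf{i}2\pi k/n_i}\sin\eta_i)\in\mathbb{C}^2\cong\mathbb{R}^4$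 ($0\le j<m_i=m(d,\eta_i)$, $0\le k<n_i=n(d,\eta_i)$) together with their images under swapping the two complex coordinates for $i\ge1$; so $M(4,d)=m_0n_0+2\sum_{i=1}^{\lfloor t/2\rfloor}m_in_i$. For $d>2$ (including $d=+\infty$) the code in any dimension is a single point. Recursive step: for $k\ge3$ and $d\in(0,2]$, with the same $\Delta\eta,t$ and $\eta_i=\pi/4+i\Delta\eta$ for $|i|\le\lfloor t/2\rfloor$, $\mathrm{SCHF}[2^k]$ with minimum distance $d$ is the union over $i$ of $\{(\cos\eta_i\mathbf{x};\sin\eta_i\mathbf{y})\}$ with $\mathbf{x}$ in $\mathrm{SCHF}[2^{k-1}]$ of minimum distance $d/\cos\eta_i$ and $\mathbf{y}$ in $\mathrm{SCHF}[2^{k-1}]$ of minimum distance $d/\sin\eta_i$ (with $d/0:=+\infty$); so $M(2^k,d)=\sum_{|i|\le\lfloor t/2\rfloor}M(2^{k-1},d/\cos\eta_i)M(2^{k-1},d/\sin\eta_i)$. *)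

theory Defs
  imports "HOL-Analysis.Analysis"
begin

text \<open>Surface area of the unit sphere S^(m-1) in R^m.\<close>
definition sphere_area :: "nat \<Rightarrow> real" where
  "sphere_area m = real m * pi powr (real m / 2) / Gamma (1 + real m / 2)"

definition schf_deta :: "real \<Rightarrow> real" where
  "schf_deta d = 2 * arcsin (d / 2)"

definition schf_t :: "real \<Rightarrow> int" where
  "schf_t d = \<lfloor>pi / (4 * arcsin (d / 2))\<rfloor>"

definition schf_eta :: "real \<Rightarrow> int \<Rightarrow> real" where
  "schf_eta d i = pi / 4 + real_of_int i * schf_deta d"

definition schf_m :: "real \<Rightarrow> real \<Rightarrow> int" where
  "schf_m d \<eta> = (if d \<le> 2 * cos \<eta> then \<lfloor>pi / arcsin (d / (2 * cos \<eta>))\<rfloor> else 1)"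

definition schf_n1 :: "real \<Rightarrow> real \<Rightarrow> int" where
  "schf_n1 d \<eta> = \<lfloor>pi / arcsin (sqrt ((d\<^sup>2 / 4) * (1 / sin \<eta>)\<^sup>2
        - (cos \<eta> / sin \<eta>)\<^sup>2 * (sin (pi / (2 * real_of_int (schf_m d \<eta>))))\<^sup>2))\<rfloor>"

definition schf_n2 :: "real \<Rightarrow> real \<Rightarrow> int" where
  "schf_n2 d \<eta> = (if d \<le> 2 * sin \<eta> then \<lfloor>2 * pi / arcsin (d / (2 * sin \<eta>))\<rfloor> else 1)"

definition schf_n :: "real \<Rightarrow> real \<Rightarrow> int" where
  "schf_n d \<eta> = max (2 * \<lfloor>real_of_int (min (schf_n1 d \<eta>) (schf_n2 d \<eta>)) / 2\<rfloor>) 1"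

definition schf_M4 :: "real \<Rightarrow> real" where
  "schf_M4 d = (if 2 < d then 1 else
     real_of_int (schf_m d (schf_eta d 0) * schf_n d (schf_eta d 0))
     + 2 * (\<Sum>i\<in>{1..schf_t d div 2}.
              real_of_int (schf_m d (schf_eta d i) * schf_n d (schf_eta d i))))"

text \<open>Recursive step. schf_Mrec j d = M(2^(j+2), d). Division by zero (d/0 = +infinity)
  yields a single point, encoded by the auxiliary case distinction.\<close>
primrec schf_Mrec :: "nat \<Rightarrow> real \<Rightarrow> real" where
  "schf_Mrec 0 d = schf_M4 d"
| "schf_Mrec (Suc j) d = (if 2 < d then 1 else
     (\<Sum>i\<in>{- (schf_t d div 2)..schf_t d div 2}.
        (if cos (schf_eta d i) = 0 then 1 else schf_Mrec j (d / cos (schf_eta d i)))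
      * (if sin (schf_eta d i) = 0 then 1 else schf_Mrec j (d / sin (schf_eta d i)))))"

definition schf_M :: "nat \<Rightarrow> real \<Rightarrow> real" where
  "schf_M k d = schf_Mrec (k - 2) d"

end

theory Submission
  imports Defs
begin


lemma arcsin_ge_self: assumes "0 \<le> y" "y \<le> 1" shows "y \<le> arcsin y"
proof -
  have "0 \<le> arcsin y" using arcsin_nonneg[of y] assms by simp
  then have "sin (arcsin y) \<le> arcsin y" by (rule sin_x_le_x)
  then show ?thesis using sin_arcsin[of y] assms by simp
qed

lemma arcsin_pos: "0 < y \<Longrightarrow> y \<le> 1 \<Longrightarrow> 0 < arcsin y"
  using arcsin_ge_self[of y] by linarith

lemma deta_ge: "0 < d \<Longrightarrow> d \<le> 2 \<Longrightarrow> d \<le> schf_deta d"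
  unfolding schf_deta_def using arcsin_ge_self[of "d/2"] by auto

lemma T_upper: assumes "0 < d" "d \<le> 2"
  shows "real_of_int (schf_t d div 2) * schf_deta d \<le> pi/4"
proof -
  have D: "schf_deta d > 0" using deta_ge assms by fastforce
  have t: "schf_t d = \<lfloor>pi / (2 * schf_deta d)\<rfloor>" unfolding schf_t_def schf_deta_def by (simp add: mult.assoc)
  have "real_of_int (2 * (schf_t d div 2)) \<le> real_of_int (schf_t d)" by simp
  also have "\<dots> \<le> pi / (2 * schf_deta d)" unfolding t by simp
  finally have "real_of_int (schf_t d div 2) \<le> pi / (4 * schf_deta d)" by simp
  then show ?thesis using D by (simp add: field_simps)
qed

lemma T_lower: assumes "0 < d" "d \<le> 2"
  shows "pi/4 - schf_deta d \<le> real_of_int (schf_t d div 2) * schf_deta d"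
proof -
  have D: "schf_deta d > 0" using deta_ge assms by fastforce
  have t: "schf_t d = \<lfloor>pi / (2 * schf_deta d)\<rfloor>" unfolding schf_t_def schf_deta_def by (simp add: mult.assoc)
  have "pi / (2 * schf_deta d) - 2 \<le> real_of_int (schf_t d) - 1" unfolding t by linarith
  also have "\<dots> \<le> real_of_int (2 * (schf_t d div 2))" by linarith
  finally have "pi / (4 * schf_deta d) - 1 \<le> real_of_int (schf_t d div 2)" by simp
  then show ?thesis using D by (simp add: field_simps)
qed

lemma deta_lim: "(schf_deta \<longlongrightarrow> 0) (at_right 0)"
proof -
  have "((\<lambda>d. arcsin (d/2)) \<longlongrightarrow> arcsin (0/2)) (at_right 0)"
    by (rule isCont_tendsto_compose[OF isCont_arcsin]) (auto intro!: tendsto_eq_intros)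
  then have "((\<lambda>d. 2 * arcsin (d/2)) \<longlongrightarrow> 2 * arcsin (0/2)) (at_right 0)"
    by (intro tendsto_mult tendsto_const)
  then show ?thesis unfolding schf_deta_def by simp
qed

lemma arcsin_over: "((\<lambda>y. arcsin y / y) \<longlongrightarrow> 1) (at 0)"
proof -
  have "DERIV arcsin 0 :> 1" using DERIV_arcsin[of 0] by simp
  then show ?thesis unfolding DERIV_def by simp
qed

lemma d_over_deta: "((\<lambda>d. d / schf_deta d) \<longlongrightarrow> 1) (at_right 0)"
proof -
  have "((\<lambda>d. arcsin (d/2) / (d/2)) \<longlongrightarrow> 1) (at_right 0)"
  proof (rule filterlim_compose[OF arcsin_over])
    show "filterlim (\<lambda>d::real. d/2) (at 0) (at_right 0)"
      by (rule filterlim_at_withinI) (auto intro!: tendsto_eq_intros simp: eventually_at_filter)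
  qed
  then have "((\<lambda>d. inverse (arcsin (d/2) / (d/2))) \<longlongrightarrow> inverse 1) (at_right 0)"
    by (intro tendsto_inverse) auto
  then show ?thesis unfolding schf_deta_def by (simp add: field_simps)
qed



lemma ind_iff:
  assumes D: "D > 0"
  shows "(x \<in> {pi/4 + real_of_int i * D - D/2..<pi/4 + real_of_int i * D + D/2}) \<longleftrightarrow> i = \<lfloor>(x - pi/4)/D + 1/2\<rfloor>"
proof -
  have "(x \<in> {pi/4 + real_of_int i * D - D/2..<pi/4 + real_of_int i * D + D/2}) \<longleftrightarrow>
        (real_of_int i \<le> (x - pi/4)/D + 1/2 \<and> (x - pi/4)/D + 1/2 < real_of_int i + 1)"
    using D by (auto simp: field_simps)
  also have "\<dots> \<longleftrightarrow> i = \<lfloor>(x - pi/4)/D + 1/2\<rfloor>" by (subst eq_commute) (simp add: floor_eq_iff)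
  finally show ?thesis .
qed

lemma riemann:
  fixes \<psi> :: "real \<Rightarrow> real \<Rightarrow> real" and G :: "real \<Rightarrow> real" and C :: real
  assumes lim: "\<And>x. 0 < x \<Longrightarrow> x < pi/2 \<Longrightarrow> ((\<lambda>p. \<psi> (fst p) (snd p)) \<longlongrightarrow> G x) (at_right 0 \<times>\<^sub>F nhds x)"
    and bnd: "\<And>d \<eta>. 0 < d \<Longrightarrow> d < 1 \<Longrightarrow> 0 \<le> \<eta> \<Longrightarrow> \<eta> \<le> pi/2 \<Longrightarrow> \<bar>\<psi> d \<eta>\<bar> \<le> C"
    and Gc: "continuous_on {0..pi/2} G"
  shows "((\<lambda>d. \<Sum>i\<in>{-(schf_t d div 2)..schf_t d div 2}. d * \<psi> d (schf_eta d i)) \<longlongrightarrow> integral {0..pi/2} G) (at_right 0)"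
proof -
  define T where "T d = schf_t d div 2" for d
  define I where "I d = {-(T d)..T d}" for d
  define ix where "ix d x = \<lfloor>(x - pi/4)/schf_deta d + 1/2\<rfloor>" for d x
  define F where "F d x = (\<Sum>i\<in>I d. (d / schf_deta d * \<psi> d (schf_eta d i)) *
       indicator {schf_eta d i - schf_deta d/2..<schf_eta d i + schf_deta d/2} x)" for d x
  define f where "f x = indicator {0..pi/2} x * G x" for x
  have Dpos: "schf_deta d > 0" if "0 < d" "d < 1" for d using deta_ge[of d] that by auto
  have Fix: "F d x = (if ix d x \<in> I d then d / schf_deta d * \<psi> d (schf_eta d (ix d x)) else 0)"
    if "0 < d" "d < 1" for d x
  proof -
    have "F d x = (\<Sum>i\<in>I d. if i = ix d x then d / schf_deta d * \<psi> d (schf_eta d i) else 0)"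
      unfolding F_def
    proof (rule sum.cong[OF refl])
      fix i
      show "d / schf_deta d * \<psi> d (schf_eta d i) * indicator {schf_eta d i - schf_deta d / 2..<schf_eta d i + schf_deta d / 2} x =
         (if i = ix d x then d / schf_deta d * \<psi> d (schf_eta d i) else 0)"
        using ind_iff[OF Dpos[OF that], of x i] unfolding schf_eta_def ix_def indicator_def by auto
    qed
    also have "\<dots> = (if ix d x \<in> I d then d / schf_deta d * \<psi> d (schf_eta d (ix d x)) else 0)"
      by (simp add: sum.delta I_def)
    finally show ?thesis .
  qed
  have intF: "integral\<^sup>L lborel (F d) = (\<Sum>i\<in>I d. d * \<psi> d (schf_eta d i))" if "0 < d" "d < 1" for d
  proof -
    have "integral\<^sup>L lborel (F d) = (\<Sum>i\<in>I d. integral\<^sup>L lborel (\<lambda>x. (d / schf_deta d * \<psi> d (schf_eta d i)) *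
       indicator {schf_eta d i - schf_deta d/2..<schf_eta d i + schf_deta d/2} x))"
      unfolding F_def
      by (rule Bochner_Integration.integral_sum[where I="I d" and M=lborel and f="\<lambda>i x. (d / schf_deta d * \<psi> d (schf_eta d i)) *
       indicator {schf_eta d i - schf_deta d/2..<schf_eta d i + schf_deta d/2} x"])
         (intro integrable_mult_right integrable_real_indicator, insert Dpos[OF that], auto)
    also have "\<dots> = (\<Sum>i\<in>I d. (d / schf_deta d * \<psi> d (schf_eta d i)) *
       measure lborel {schf_eta d i - schf_deta d/2..<schf_eta d i + schf_deta d/2})"
      by (intro sum.cong refl) (simp add: Dpos[OF that] less_imp_le)
    also have "\<dots> = (\<Sum>i\<in>I d. d * \<psi> d (schf_eta d i))"
      using Dpos[OF that] by (intro sum.cong refl) auto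
    finally show ?thesis .
  qed

  have ev_small: "eventually (\<lambda>d. 0 < d \<and> d < 1 \<and> schf_deta d < c) (at_right 0)" if "c > 0" for c
  proof -
    have "eventually (\<lambda>d::real. d < 1) (at_right 0)"
      unfolding eventually_at_right_field by (intro exI[of _ 1]) auto
    moreover have "eventually (\<lambda>d. schf_deta d < c) (at_right 0)"
      using order_tendstoD(2)[OF deta_lim that] .
    ultimately show ?thesis using eventually_at_right_less[of 0] by eventually_elim auto
  qed
  have eta_range: "0 \<le> schf_eta d i \<and> schf_eta d i \<le> pi/2" if "0 < d" "d < 1" "i \<in> I d" for d i
  proof -
    have D: "schf_deta d > 0" using Dpos that by auto
    have "real_of_int i * schf_deta d \<le> real_of_int (T d) * schf_deta d"
      using that D by (intro mult_right_mono) (auto simp: I_def)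
    moreover have "- (real_of_int (T d) * schf_deta d) \<le> real_of_int i * schf_deta d"
      using that D mult_right_mono[of "- real_of_int (T d)" "real_of_int i" "schf_deta d"] by (auto simp: I_def)
    ultimately show ?thesis using T_upper[of d] that unfolding schf_eta_def T_def by auto
  qed
  have ix_mem: "x - schf_deta d / 2 < schf_eta d (ix d x) \<and> schf_eta d (ix d x) \<le> x + schf_deta d / 2"
    if "0 < d" "d < 1" for d x
    using ind_iff[OF Dpos[OF that], of x "ix d x"] unfolding ix_def schf_eta_def by auto
  have Fout: "F d x = 0" if "0 < d" "d < 1" "x < - schf_deta d / 2 \<or> x > pi/2 + schf_deta d / 2" for d x
  proof -
    have "ix d x \<notin> I d"
    proof
      assume "ix d x \<in> I d"
      from eta_range[OF that(1,2) this] ix_mem[OF that(1,2), of x] that(3) show False by auto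
    qed
    then show ?thesis using Fix[OF that(1,2)] by simp
  qed
  have deta_le: "schf_deta d \<le> pi" if "0 < d" "d < 1" for d
    using arcsin_ubound[of "d/2"] that unfolding schf_deta_def by auto
  have dom: "\<bar>F d x\<bar> \<le> \<bar>C\<bar> * indicator {-2..4::real} x" if "0 < d" "d < 1" for d x
  proof (cases "ix d x \<in> I d")
    case True
    have r: "0 \<le> schf_eta d (ix d x) \<and> schf_eta d (ix d x) \<le> pi/2" using eta_range[OF that True] .
    have "\<bar>\<psi> d (schf_eta d (ix d x))\<bar> \<le> C" using bnd[OF that] r by auto
    moreover have "0 < d / schf_deta d" "d / schf_deta d \<le> 1" using deta_ge[of d] that Dpos[OF that] by auto
    ultimately have "\<bar>d / schf_deta d * \<psi> d (schf_eta d (ix d x))\<bar> \<le> C"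
    proof -
      assume a: "\<bar>\<psi> d (schf_eta d (ix d x))\<bar> \<le> C" "0 < d / schf_deta d" "d / schf_deta d \<le> 1"
      have "\<bar>d / schf_deta d * \<psi> d (schf_eta d (ix d x))\<bar> = d / schf_deta d * \<bar>\<psi> d (schf_eta d (ix d x))\<bar>"
        using a(2) that Dpos[OF that] by (simp add: abs_mult)
      also have "\<dots> \<le> 1 * \<bar>\<psi> d (schf_eta d (ix d x))\<bar>" using a by (intro mult_right_mono) auto
      finally show ?thesis using a(1) by simp
    qed
    moreover have "x \<in> {-2..4::real}" using ix_mem[OF that, of x] r deta_le[OF that] pi_less_4 by auto
    ultimately show ?thesis using Fix[OF that] True by auto
  next
    case False
    then show ?thesis using Fix[OF that] by simp
  qed
  have pw: "((\<lambda>d. F d x) \<longlongrightarrow> f x) (at_right 0)" if "x \<noteq> 0" "x \<noteq> pi/2" for x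
  proof -
    have "x < 0 \<or> x > pi/2 \<or> (0 < x \<and> x < pi/2)" using that by linarith
    then consider "x < 0" | "x > pi/2" | "0 < x \<and> x < pi/2" by blast
    then show ?thesis
    proof cases
      case 1
      have "eventually (\<lambda>d. F d x = 0) (at_right 0)"
        using ev_small[of "-2*x"] 1 by (auto elim!: eventually_mono intro!: Fout)
      moreover have "f x = 0" using 1 unfolding f_def by auto
      ultimately show ?thesis by (simp add: tendsto_eventually)
    next
      case 2
      have "eventually (\<lambda>d. F d x = 0) (at_right 0)"
        using ev_small[of "2*(x - pi/2)"] 2 by (auto elim!: eventually_mono intro!: Fout)
      moreover have "f x = 0" using 2 unfolding f_def by auto
      ultimately show ?thesis by (simp add: tendsto_eventually)
    next
      case 3
      define E where "E d = schf_eta d (ix d x)" for d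
      have ev: "eventually (\<lambda>d. 0 < d \<and> d < 1 \<and> schf_deta d < min x ((pi/2 - x)/2)) (at_right 0)"
        using ev_small[of "min x ((pi/2 - x)/2)"] 3 by auto
      have inI: "ix d x \<in> I d" if "0 < d" "d < 1" "schf_deta d < min x ((pi/2 - x)/2)" for d
      proof -
        have D: "schf_deta d > 0" using Dpos that by auto
        have TL: "pi/4 - schf_deta d \<le> real_of_int (T d) * schf_deta d" using T_lower[of d] that unfolding T_def by auto
        define r where "r = (x - pi/4)/schf_deta d + 1/2"
        have rD: "r * schf_deta d = x - pi/4 + schf_deta d / 2" using D unfolding r_def by (simp add: field_simps)
        have "r * schf_deta d \<le> real_of_int (T d) * schf_deta d" using rD TL that D by auto
        then have "r \<le> real_of_int (T d)" using D by simp
        then have up: "ix d x \<le> T d" unfolding ix_def r_def[symmetric] by linarith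
        have "(r - 1) * schf_deta d \<ge> (- real_of_int (T d) - 1) * schf_deta d" using rD TL that D
          by (simp add: algebra_simps)
        then have "r - 1 \<ge> - real_of_int (T d) - 1" using D by simp
        then have lo: "ix d x \<ge> - T d" unfolding ix_def r_def[symmetric] by linarith
        show ?thesis using up lo unfolding I_def by auto
      qed
      have Elim: "(E \<longlongrightarrow> x) (at_right 0)"
      proof (rule tendsto_sandwich[of "\<lambda>d. x - schf_deta d / 2" _ _ "\<lambda>d. x + schf_deta d / 2"])
        show "eventually (\<lambda>d. x - schf_deta d / 2 \<le> E d) (at_right 0)"
          using ev proof eventually_elim
          case (elim d) then show ?case using ix_mem[of d x] unfolding E_def by auto
        qed
        show "eventually (\<lambda>d. E d \<le> x + schf_deta d / 2) (at_right 0)"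
          using ev proof eventually_elim
          case (elim d) then show ?case using ix_mem[of d x] unfolding E_def by auto
        qed
        show "((\<lambda>d. x - schf_deta d / 2) \<longlongrightarrow> x) (at_right 0)"
          using tendsto_diff[OF tendsto_const tendsto_divide[OF deta_lim tendsto_const]] by force
        show "((\<lambda>d. x + schf_deta d / 2) \<longlongrightarrow> x) (at_right 0)"
          using tendsto_add[OF tendsto_const tendsto_divide[OF deta_lim tendsto_const]] by force
      qed
      have "((\<lambda>d. \<psi> d (E d)) \<longlongrightarrow> G x) (at_right 0)"
        using filterlim_compose[OF lim[OF conjunct1[OF 3] conjunct2[OF 3]]
            filterlim_Pair[OF filterlim_ident Elim]] by simp
      then have "((\<lambda>d. d / schf_deta d * \<psi> d (E d)) \<longlongrightarrow> 1 * G x) (at_right 0)"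
        by (intro tendsto_mult d_over_deta)
      moreover have "eventually (\<lambda>d. d / schf_deta d * \<psi> d (E d) = F d x) (at_right 0)"
        using ev by eventually_elim (use Fix inI E_def in auto)
      moreover have "f x = G x" using 3 unfolding f_def by auto
      ultimately show ?thesis by (auto intro: Lim_transform_eventually)
    qed
  qed
  have Fmeas: "F d \<in> borel_measurable lborel" for d unfolding F_def by measurable
  have fint: "integrable lborel f"
    using borel_integrable_atLeastAtMost'[OF Gc] unfolding set_integrable_def f_def by simp
  have fval: "integral\<^sup>L lborel f = integral {0..pi/2} G"
    using set_borel_integral_eq_integral(2)[OF borel_integrable_atLeastAtMost'[OF Gc]]
    unfolding f_def set_lebesgue_integral_def by simp
  have AEx: "AE x in lborel. x \<noteq> 0 \<and> x \<noteq> pi/2"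
    using AE_lborel_singleton[of 0] AE_lborel_singleton[of "pi/2"] by eventually_elim auto
  show ?thesis
  proof (rule tendsto_at_right_sequentially[of 0 1])
    show "(0::real) < 1" by simp
    fix S :: "nat \<Rightarrow> real"
    assume S0: "\<And>n. 0 < S n" and S1: "\<And>n. S n < 1" and "decseq S" and Slim: "S \<longlonglongrightarrow> 0"
    have Sf: "filterlim S (at_right 0) sequentially"
      using Slim S0 by (intro tendsto_imp_filterlim_at_right) auto
    have "(\<lambda>n. integral\<^sup>L lborel (F (S n))) \<longlonglongrightarrow> integral\<^sup>L lborel f"
    proof (rule integral_dominated_convergence[where w="\<lambda>x. \<bar>C\<bar> * indicator {-2..4::real} x"])
      show "f \<in> borel_measurable lborel" using fint by auto
      show "\<And>n. F (S n) \<in> borel_measurable lborel" using Fmeas by auto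
      show "integrable lborel (\<lambda>x. \<bar>C\<bar> * indicator {-2..4::real} x)"
        by (intro integrable_mult_right integrable_real_indicator) auto
      show "AE x in lborel. (\<lambda>n. F (S n) x) \<longlonglongrightarrow> f x"
        using AEx by eventually_elim (auto intro: filterlim_compose[OF pw Sf])
      show "\<And>n. AE x in lborel. norm (F (S n) x) \<le> \<bar>C\<bar> * indicator {-2..4::real} x"
        using dom S0 S1 by auto
    qed
    then show "(\<lambda>n. \<Sum>i\<in>{- (schf_t (S n) div 2)..schf_t (S n) div 2}. S n * \<psi> (S n) (schf_eta (S n) i))
          \<longlonglongrightarrow> integral {0..pi/2} G"
      using intF[OF S0 S1] fval unfolding I_def T_def by simp
  qed
qed



lemma atr_iff: "filterlim D (at_right 0) F \<longleftrightarrow> (D \<longlongrightarrow> (0::real)) F \<and> eventually (\<lambda>p. D p > 0) F"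
  by (auto simp: filterlim_at elim: eventually_mono)

lemma floor_lim:
  assumes D: "filterlim D (at_right 0) F" and L: "((\<lambda>p. D p * X p) \<longlongrightarrow> L) F"
  shows "((\<lambda>p. D p * real_of_int \<lfloor>X p\<rfloor>) \<longlongrightarrow> L) F"
proof (rule tendsto_sandwich[of "\<lambda>p. D p * X p - D p" _ _ "\<lambda>p. D p * X p"])
  have D0: "(D \<longlongrightarrow> 0) F" and Dp: "eventually (\<lambda>p. D p > 0) F"
    using D unfolding atr_iff by auto
  show "eventually (\<lambda>p. D p * X p - D p \<le> D p * real_of_int \<lfloor>X p\<rfloor>) F"
    using Dp
  proof eventually_elim
    case (elim p)
    have "X p - 1 \<le> real_of_int \<lfloor>X p\<rfloor>" by linarith
    then have "D p * (X p - 1) \<le> D p * real_of_int \<lfloor>X p\<rfloor>" using elim by (intro mult_left_mono) auto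
    then show ?case by (simp add: algebra_simps)
  qed
  show "eventually (\<lambda>p. D p * real_of_int \<lfloor>X p\<rfloor> \<le> D p * X p) F"
    using Dp by eventually_elim (intro mult_left_mono, auto)
  show "((\<lambda>p. D p * X p - D p) \<longlongrightarrow> L) F" using tendsto_diff[OF L D0] by simp
  show "((\<lambda>p. D p * X p) \<longlongrightarrow> L) F" by (rule L)
qed

lemma arcsin_ratio:
  assumes u: "filterlim u (at_right 0) F"
  shows "((\<lambda>p. u p / arcsin (u p)) \<longlongrightarrow> 1) F"
proof -
  have u': "filterlim u (at 0) F" using u unfolding atr_iff filterlim_at by (auto elim: eventually_mono)
  have "((\<lambda>p. arcsin (u p) / u p) \<longlongrightarrow> 1) F"
    by (rule filterlim_compose[OF arcsin_over u'])
  then have "((\<lambda>p. inverse (arcsin (u p) / u p)) \<longlongrightarrow> inverse 1) F"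
    by (intro tendsto_inverse) auto
  then show ?thesis by simp
qed

lemma sin_over: "((\<lambda>y::real. sin y / y) \<longlongrightarrow> 1) (at 0)"
proof -
  have "DERIV sin 0 :> 1" using DERIV_sin[of 0] by simp
  then show ?thesis unfolding DERIV_def by simp
qed

lemma sin_ratio:
  fixes z :: "'a \<Rightarrow> real"
  assumes z: "(z \<longlongrightarrow> 0) F" and nz: "eventually (\<lambda>p. z p \<noteq> 0) F"
  shows "((\<lambda>p. sin (z p) / z p) \<longlongrightarrow> 1) F"
proof -
  have z': "filterlim z (at 0) F" using z nz unfolding filterlim_at by (auto elim: eventually_mono)
  show ?thesis by (rule filterlim_compose[OF sin_over z'])
qed

lemma lim_floor_arcsin:
  assumes D: "filterlim D (at_right 0) F" and c: "(c \<longlongrightarrow> c0) F" and c0: "c0 > 0" and a: "a > 0"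
  shows "((\<lambda>p. D p * real_of_int \<lfloor>a / arcsin (D p / (2 * c p))\<rfloor>) \<longlongrightarrow> 2 * a * c0) F"
proof (rule floor_lim[OF D])
  have D0: "(D \<longlongrightarrow> 0) F" and Dp: "eventually (\<lambda>p. D p > 0) F"
    using D unfolding atr_iff by auto
  have cp: "eventually (\<lambda>p. c p > 0) F" using order_tendstoD(1)[OF c c0] .
  define u where "u p = D p / (2 * c p)" for p
  have "(u \<longlongrightarrow> 0 / (2 * c0)) F" unfolding u_def using c0 by (intro tendsto_intros D0 c) auto
  moreover have "eventually (\<lambda>p. u p > 0) F" using Dp cp by eventually_elim (auto simp: u_def)
  ultimately have u: "filterlim u (at_right 0) F" unfolding atr_iff by simp
  have "((\<lambda>p. a * 2 * c p * (u p / arcsin (u p))) \<longlongrightarrow> a * 2 * c0 * 1) F"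
    by (intro tendsto_intros c arcsin_ratio[OF u])
  moreover have "eventually (\<lambda>p. a * 2 * c p * (u p / arcsin (u p)) = D p * (a / arcsin (D p / (2 * c p)))) F"
    using cp by eventually_elim (auto simp: u_def field_simps)
  ultimately show "((\<lambda>p. D p * (a / arcsin (D p / (2 * c p)))) \<longlongrightarrow> 2 * a * c0) F"
    by (auto intro: Lim_transform_eventually simp: mult_ac)
qed

lemma lim_m:
  fixes D E :: "'a \<Rightarrow> real"
  assumes D: "filterlim D (at_right 0) F" and E: "(E \<longlongrightarrow> y) F" and y: "0 < y" "y < pi/2"
  shows "((\<lambda>p. D p * real_of_int (schf_m (D p) (E p))) \<longlongrightarrow> 2 * pi * cos y) F"
proof -
  have D0: "(D \<longlongrightarrow> 0) F" and Dp: "eventually (\<lambda>p. D p > 0) F"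
    using D unfolding atr_iff by auto
  have cy: "cos y > 0" using y by (intro cos_gt_zero_pi) auto
  have cE: "((\<lambda>p. cos (E p)) \<longlongrightarrow> cos y) F" by (rule isCont_tendsto_compose[OF isCont_cos E])
  have e1: "eventually (\<lambda>p. cos (E p) > cos y / 2) F" using order_tendstoD(1)[OF cE, of "cos y / 2"] cy by simp
  have e2: "eventually (\<lambda>p. D p < cos y) F" using order_tendstoD(2)[OF D0 cy] .
  have "eventually (\<lambda>p. D p * real_of_int \<lfloor>pi / arcsin (D p / (2 * cos (E p)))\<rfloor> =
     D p * real_of_int (schf_m (D p) (E p))) F"
    using e1 e2 by eventually_elim (auto simp: schf_m_def)
  moreover have "((\<lambda>p. D p * real_of_int \<lfloor>pi / arcsin (D p / (2 * cos (E p)))\<rfloor>) \<longlongrightarrow> 2 * pi * cos y) F"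
    by (rule lim_floor_arcsin[OF D cE cy pi_gt_zero])
  ultimately show ?thesis by (auto intro: Lim_transform_eventually)
qed

lemma lim_n2:
  fixes D E :: "'a \<Rightarrow> real"
  assumes D: "filterlim D (at_right 0) F" and E: "(E \<longlongrightarrow> y) F" and y: "0 < y" "y < pi/2"
  shows "((\<lambda>p. D p * real_of_int (schf_n2 (D p) (E p))) \<longlongrightarrow> 4 * pi * sin y) F"
proof -
  have D0: "(D \<longlongrightarrow> 0) F" and Dp: "eventually (\<lambda>p. D p > 0) F"
    using D unfolding atr_iff by auto
  have sy: "sin y > 0" using y by (intro sin_gt_zero) auto
  have sE: "((\<lambda>p. sin (E p)) \<longlongrightarrow> sin y) F" by (rule isCont_tendsto_compose[OF isCont_sin E])
  have e1: "eventually (\<lambda>p. sin (E p) > sin y / 2) F" using order_tendstoD(1)[OF sE, of "sin y / 2"] sy by simp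
  have e2: "eventually (\<lambda>p. D p < sin y) F" using order_tendstoD(2)[OF D0 sy] .
  have "eventually (\<lambda>p. D p * real_of_int \<lfloor>(2 * pi) / arcsin (D p / (2 * sin (E p)))\<rfloor> =
     D p * real_of_int (schf_n2 (D p) (E p))) F"
    using e1 e2 by eventually_elim (auto simp: schf_n2_def)
  moreover have "((\<lambda>p. D p * real_of_int \<lfloor>(2 * pi) / arcsin (D p / (2 * sin (E p)))\<rfloor>) \<longlongrightarrow> 2 * (2 * pi) * sin y) F"
    by (rule lim_floor_arcsin[OF D sE sy]) simp
  ultimately show ?thesis by (auto intro: Lim_transform_eventually)
qed

lemma lim_n1:
  fixes D E :: "'a \<Rightarrow> real"
  assumes D: "filterlim D (at_right 0) F" and E: "(E \<longlongrightarrow> y) F" and y: "0 < y" "y < pi/2"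
  shows "((\<lambda>p. D p * real_of_int (schf_n1 (D p) (E p))) \<longlongrightarrow> 4 * pi * sin y / sqrt 3) F"
proof -
  have D0: "(D \<longlongrightarrow> 0) F" and Dp: "eventually (\<lambda>p. D p > 0) F"
    using D unfolding atr_iff by auto
  have cy: "cos y > 0" using y by (intro cos_gt_zero_pi) auto
  have sy: "sin y > 0" using y by (intro sin_gt_zero) auto
  have cE: "((\<lambda>p. cos (E p)) \<longlongrightarrow> cos y) F" by (rule isCont_tendsto_compose[OF isCont_cos E])
  have sE: "((\<lambda>p. sin (E p)) \<longlongrightarrow> sin y) F" by (rule isCont_tendsto_compose[OF isCont_sin E])
  define m where "m p = real_of_int (schf_m (D p) (E p))" for p
  have Dm: "((\<lambda>p. D p * m p) \<longlongrightarrow> 2 * pi * cos y) F" using lim_m[OF D E y] unfolding m_def .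
  have Dmpos: "eventually (\<lambda>p. D p * m p > 0) F" using order_tendstoD(1)[OF Dm, of 0] cy by simp
  define z where "z p = pi / (2 * m p)" for p
  define K where "K = pi / (2 * (2 * pi * cos y))"
  have zD: "((\<lambda>p. z p / D p) \<longlongrightarrow> K) F"
  proof -
    have "((\<lambda>p. pi / (2 * (D p * m p))) \<longlongrightarrow> K) F"
      unfolding K_def using cy by (intro tendsto_divide tendsto_const tendsto_mult Dm) auto
    moreover have "eventually (\<lambda>p. pi / (2 * (D p * m p)) = z p / D p) F"
      using Dp by eventually_elim (auto simp: z_def field_simps)
    ultimately show ?thesis by (rule Lim_transform_eventually)
  qed
  have z0: "(z \<longlongrightarrow> 0) F"
  proof -
    have "((\<lambda>p. D p * (z p / D p)) \<longlongrightarrow> 0 * K) F" by (intro tendsto_mult D0 zD)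
    moreover have "eventually (\<lambda>p. D p * (z p / D p) = z p) F"
      using Dp by eventually_elim auto
    ultimately show ?thesis by (auto intro: Lim_transform_eventually)
  qed
  have znz: "eventually (\<lambda>p. z p \<noteq> 0) F"
    using Dmpos by eventually_elim (auto simp: z_def)
  have sz: "((\<lambda>p. sin (z p) / D p) \<longlongrightarrow> 1 * K) F"
  proof -
    have "((\<lambda>p. (sin (z p) / z p) * (z p / D p)) \<longlongrightarrow> 1 * K) F"
      by (intro tendsto_mult sin_ratio[OF z0 znz] zD)
    moreover have "eventually (\<lambda>p. (sin (z p) / z p) * (z p / D p) = sin (z p) / D p) F"
      using znz by eventually_elim auto
    ultimately show ?thesis by (rule Lim_transform_eventually)
  qed
  define w where "w p = (1/4) * (1 / sin (E p))^2 - (cos (E p) / sin (E p))^2 * (sin (z p) / D p)^2" for p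
  define w0 where "w0 = (sqrt 3 / (4 * sin y))^2"
  have w0eq: "(1/4) * (1 / sin y)^2 - (cos y / sin y)^2 * (1 * K)^2 = w0"
    unfolding w0_def K_def using cy sy pi_gt_zero
    by (simp add: field_simps power2_eq_square)
  have w0pos: "w0 > 0" unfolding w0_def using sy by simp
  have wlim: "(w \<longlongrightarrow> w0) F"
    unfolding w_def w0eq[symmetric] using sy
    by (intro tendsto_diff tendsto_mult tendsto_power tendsto_divide tendsto_const sE cE sz) auto
  have sqw0: "sqrt w0 = sqrt 3 / (4 * sin y)" unfolding w0_def using sy by simp
  have sqw: "((\<lambda>p. sqrt (w p)) \<longlongrightarrow> sqrt w0) F" by (intro tendsto_real_sqrt wlim)
  have wpos: "eventually (\<lambda>p. w p > 0) F" using order_tendstoD(1)[OF wlim w0pos] .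
  define v where "v p = sqrt ((D p)\<^sup>2 / 4 * (1 / sin (E p))\<^sup>2 - (cos (E p) / sin (E p))\<^sup>2 * (sin (pi / (2 * m p)))\<^sup>2)" for p
  have veq: "eventually (\<lambda>p. v p = D p * sqrt (w p)) F"
    using Dp
  proof eventually_elim
    case (elim p)
    have "(D p)\<^sup>2 / 4 * (1 / sin (E p))\<^sup>2 - (cos (E p) / sin (E p))\<^sup>2 * (sin (pi / (2 * m p)))\<^sup>2 = (D p)^2 * w p"
      unfolding w_def z_def using elim by (simp add: field_simps power2_eq_square)
    then have "v p = sqrt ((D p)^2 * w p)" unfolding v_def by simp
    also have "\<dots> = D p * sqrt (w p)" using elim by (simp add: real_sqrt_mult)
    finally show ?case .
  qed
  have v: "filterlim v (at_right 0) F"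
  proof -
    have "((\<lambda>p. D p * sqrt (w p)) \<longlongrightarrow> 0 * sqrt w0) F" by (intro tendsto_mult D0 sqw)
    moreover have "eventually (\<lambda>p. D p * sqrt (w p) = v p) F" using veq by (auto elim: eventually_mono)
    ultimately have "(v \<longlongrightarrow> 0) F" by (auto intro: Lim_transform_eventually)
    moreover have "eventually (\<lambda>p. v p > 0) F" using veq Dp wpos by eventually_elim auto
    ultimately show ?thesis unfolding atr_iff by simp
  qed
  have main: "((\<lambda>p. D p * (pi / arcsin (v p))) \<longlongrightarrow> pi * 1 / sqrt w0) F"
  proof -
    have "((\<lambda>p. pi * (v p / arcsin (v p)) / sqrt (w p)) \<longlongrightarrow> pi * 1 / sqrt w0) F"
      using w0pos by (intro tendsto_divide tendsto_mult tendsto_const arcsin_ratio[OF v] sqw) auto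
    moreover have "eventually (\<lambda>p. pi * (v p / arcsin (v p)) / sqrt (w p) = D p * (pi / arcsin (v p))) F"
      using veq wpos by eventually_elim (auto simp: field_simps)
    ultimately show ?thesis by (rule Lim_transform_eventually)
  qed
  have "((\<lambda>p. D p * real_of_int \<lfloor>pi / arcsin (v p)\<rfloor>) \<longlongrightarrow> pi * 1 / sqrt w0) F"
    by (rule floor_lim[OF D main])
  moreover have "schf_n1 (D p) (E p) = \<lfloor>pi / arcsin (v p)\<rfloor>" for p
    unfolding schf_n1_def v_def m_def by simp
  moreover have "pi * 1 / sqrt w0 = 4 * pi * sin y / sqrt 3" unfolding sqw0 using sy by simp
  ultimately show ?thesis by simp
qed

lemma lim_n:
  fixes D E :: "'a \<Rightarrow> real"
  assumes D: "filterlim D (at_right 0) F" and E: "(E \<longlongrightarrow> y) F" and y: "0 < y" "y < pi/2"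
  shows "((\<lambda>p. D p * real_of_int (schf_n (D p) (E p))) \<longlongrightarrow> 4 * pi * sin y / sqrt 3) F"
proof -
  have D0: "(D \<longlongrightarrow> 0) F" and Dp: "eventually (\<lambda>p. D p > 0) F"
    using D unfolding atr_iff by auto
  have sy: "sin y > 0" using y by (intro sin_gt_zero) auto
  define L1 where "L1 = 4 * pi * sin y / sqrt 3"
  have L1pos: "L1 > 0" unfolding L1_def using sy by simp
  have L12: "L1 \<le> 4 * pi * sin y"
  proof -
    have "4 * pi * sin y / sqrt 3 \<le> 4 * pi * sin y / 1"
      using sy by (intro divide_left_mono) auto
    then show ?thesis unfolding L1_def by simp
  qed
  define X where "X p = real_of_int (min (schf_n1 (D p) (E p)) (schf_n2 (D p) (E p))) / 2" for p
  have D2: "filterlim (\<lambda>p. 2 * D p) (at_right 0) F"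
    unfolding atr_iff using D0 Dp by (auto intro: tendsto_eq_intros elim: eventually_mono)
  have "((\<lambda>p. min (D p * real_of_int (schf_n1 (D p) (E p))) (D p * real_of_int (schf_n2 (D p) (E p))))
      \<longlongrightarrow> min L1 (4 * pi * sin y)) F"
    unfolding L1_def by (intro tendsto_min lim_n1[OF D E y] lim_n2[OF D E y])
  moreover have "eventually (\<lambda>p. min (D p * real_of_int (schf_n1 (D p) (E p))) (D p * real_of_int (schf_n2 (D p) (E p)))
      = 2 * D p * X p) F"
    using Dp by eventually_elim (auto simp: X_def min_def)
  moreover have "min L1 (4 * pi * sin y) = L1" using L12 by simp
  ultimately have "((\<lambda>p. 2 * D p * X p) \<longlongrightarrow> L1) F" by (auto intro: Lim_transform_eventually)
  then have fl: "((\<lambda>p. 2 * D p * real_of_int \<lfloor>X p\<rfloor>) \<longlongrightarrow> L1) F" by (rule floor_lim[OF D2])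
  have "((\<lambda>p. max (2 * D p * real_of_int \<lfloor>X p\<rfloor>) (D p)) \<longlongrightarrow> max L1 0) F"
    by (intro tendsto_max fl D0)
  moreover have "eventually (\<lambda>p. max (2 * D p * real_of_int \<lfloor>X p\<rfloor>) (D p) = D p * real_of_int (schf_n (D p) (E p))) F"
    using Dp
  proof eventually_elim
    case (elim p)
    have "D p * real_of_int (schf_n (D p) (E p)) = D p * max (2 * real_of_int \<lfloor>X p\<rfloor>) 1"
      unfolding schf_n_def X_def by (simp add: of_int_max)
    also have "\<dots> = max (2 * D p * real_of_int \<lfloor>X p\<rfloor>) (D p)"
      using elim by (auto simp: max_def)
    finally show ?case by simp
  qed
  moreover have "max L1 0 = L1" using L1pos by simp
  ultimately show ?thesis unfolding L1_def by (auto intro: Lim_transform_eventually)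
qed

lemma lim_mn:
  fixes D E :: "'a \<Rightarrow> real"
  assumes D: "filterlim D (at_right 0) F" and E: "(E \<longlongrightarrow> y) F" and y: "0 < y" "y < pi/2"
  shows "((\<lambda>p. (D p)^2 * real_of_int (schf_m (D p) (E p) * schf_n (D p) (E p))) \<longlongrightarrow>
     8 * pi^2 / sqrt 3 * (sin y * cos y)) F"
proof -
  have "((\<lambda>p. (D p * real_of_int (schf_m (D p) (E p))) * (D p * real_of_int (schf_n (D p) (E p)))) \<longlongrightarrow>
     (2 * pi * cos y) * (4 * pi * sin y / sqrt 3)) F"
    by (intro tendsto_mult lim_m[OF D E y] lim_n[OF D E y])
  moreover have "(2 * pi * cos y) * (4 * pi * sin y / sqrt 3) = 8 * pi^2 / sqrt 3 * (sin y * cos y)"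
    by (simp add: power2_eq_square)
  ultimately show ?thesis by (simp add: power2_eq_square mult_ac)
qed



lemma T_nonneg: assumes "0 < d" "d \<le> 2" shows "0 \<le> schf_t d div 2"
proof -
  have "0 < arcsin (d/2)" using assms by (intro arcsin_pos) auto
  then have "0 \<le> pi / (4 * arcsin (d/2))" by simp
  then have "0 \<le> schf_t d" unfolding schf_t_def by simp
  then show ?thesis by simp
qed

lemma sum_bound:
  assumes d: "0 < d" "d \<le> 2" and K: "\<And>i. i \<in> {-(schf_t d div 2)..schf_t d div 2} \<Longrightarrow> \<bar>\<phi> i\<bar> \<le> K"
  shows "\<bar>\<Sum>i\<in>{-(schf_t d div 2)..schf_t d div 2}. d * \<phi> i\<bar> \<le> (pi/2 + 2) * K"
proof -
  define T where "T = schf_t d div 2"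
  have T0: "0 \<le> T" using T_nonneg[OF d] unfolding T_def .
  have K0: "0 \<le> K" using K[of 0] T0 unfolding T_def by force
  have "\<bar>\<Sum>i\<in>{-T..T}. d * \<phi> i\<bar> \<le> (\<Sum>i\<in>{-T..T}. \<bar>d * \<phi> i\<bar>)" by (rule sum_abs)
  also have "\<dots> \<le> (\<Sum>i\<in>{-T..T}. d * K)"
    using K d unfolding T_def by (intro sum_mono) (auto simp: abs_mult intro!: mult_left_mono)
  also have "\<dots> = real (nat (2 * T + 1)) * d * K" by simp
  also have "real (nat (2 * T + 1)) = 2 * real_of_int T + 1" using T0 by simp
  also have "(2 * real_of_int T + 1) * d * K \<le> (pi/2 + 2) * K"
  proof (rule mult_right_mono[OF _ K0])
    have "real_of_int T * d \<le> real_of_int T * schf_deta d"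
      using deta_ge[OF d] T0 by (intro mult_left_mono) auto
    also have "\<dots> \<le> pi/4" using T_upper[OF d] unfolding T_def .
    finally show "(2 * real_of_int T + 1) * d \<le> pi/2 + 2" using d by (simp add: algebra_simps)
  qed
  finally show ?thesis unfolding T_def .
qed

lemma m_bound:
  assumes d: "0 < d" "d \<le> 2" and e: "0 \<le> \<eta>" "\<eta> \<le> pi/2"
  shows "1 \<le> schf_m d \<eta> \<and> d * real_of_int (schf_m d \<eta>) \<le> 2 * pi"
proof (cases "d \<le> 2 * cos \<eta>")
  case True
  have c: "cos \<eta> > 0" using True d by auto
  define u where "u = d / (2 * cos \<eta>)"
  have u: "0 < u" "u \<le> 1" using True c d unfolding u_def by (auto simp: field_simps)
  have a: "0 < arcsin u" "arcsin u \<le> pi/2" "u \<le> arcsin u"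
    using arcsin_pos[OF u] arcsin_ubound[of u] arcsin_ge_self[of u] u by auto
  have "2 \<le> pi / arcsin u" using a by (simp add: field_simps)
  then have m1: "2 \<le> schf_m d \<eta>" using True unfolding schf_m_def u_def by (simp add: le_floor_iff)
  have "d * real_of_int (schf_m d \<eta>) \<le> d * (pi / arcsin u)"
    using True d unfolding schf_m_def u_def by (intro mult_left_mono) auto
  also have "\<dots> \<le> d * (pi / u)" using a u d by (intro mult_left_mono divide_left_mono) auto
  also have "\<dots> = 2 * pi * cos \<eta>" using c d unfolding u_def by (simp add: field_simps)
  also have "\<dots> \<le> 2 * pi" using cos_le_one[of \<eta>] by simp
  finally show ?thesis using m1 by simp
next
  case False
  then show ?thesis using d pi_gt3 unfolding schf_m_def by simp
qed

lemma n_bound: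
  assumes d: "0 < d" "d \<le> 2" and e: "0 \<le> \<eta>" "\<eta> \<le> pi/2"
  shows "1 \<le> schf_n d \<eta> \<and> d * real_of_int (schf_n d \<eta>) \<le> 4 * pi + 2"
proof -
  have n2: "d * real_of_int (schf_n2 d \<eta>) \<le> 4 * pi"
  proof (cases "d \<le> 2 * sin \<eta>")
    case True
    have s: "sin \<eta> > 0" using True d by auto
    define u where "u = d / (2 * sin \<eta>)"
    have u: "0 < u" "u \<le> 1" using True s d unfolding u_def by (auto simp: field_simps)
    have a: "0 < arcsin u" "u \<le> arcsin u"
      using arcsin_pos[OF u] arcsin_ge_self[of u] u by auto
    have "d * real_of_int (schf_n2 d \<eta>) \<le> d * (2 * pi / arcsin u)"
      using True d unfolding schf_n2_def u_def by (intro mult_left_mono) auto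
    also have "\<dots> \<le> d * (2 * pi / u)" using a u d by (intro mult_left_mono divide_left_mono) auto
    also have "\<dots> = 4 * pi * sin \<eta>" using s d unfolding u_def by (simp add: field_simps)
    also have "\<dots> \<le> 4 * pi" using sin_le_one[of \<eta>] by simp
    finally show ?thesis .
  next
    case False
    then show ?thesis using d pi_gt3 unfolding schf_n2_def by simp
  qed
  define Y where "Y = min (schf_n1 d \<eta>) (schf_n2 d \<eta>)"
  have "\<lfloor>real_of_int Y / 2\<rfloor> = Y div 2" by (metis floor_divide_of_int_eq of_int_numeral)
  then have "2 * \<lfloor>real_of_int Y / 2\<rfloor> \<le> Y" by presburger
  moreover have "Y \<le> schf_n2 d \<eta>" unfolding Y_def by simp
  ultimately have nle: "schf_n d \<eta> \<le> max (schf_n2 d \<eta>) 1" unfolding schf_n_def Y_def[symmetric] by linarith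
  have "d * real_of_int (schf_n d \<eta>) \<le> d * real_of_int (max (schf_n2 d \<eta>) 1)"
    using nle d by (intro mult_left_mono) auto
  also have "\<dots> = max (d * real_of_int (schf_n2 d \<eta>)) d" using d by (auto simp: max_def)
  also have "\<dots> \<le> 4 * pi + 2" using n2 d pi_gt3 by (intro max.boundedI) linarith+
  finally have "d * real_of_int (schf_n d \<eta>) \<le> 4 * pi + 2" .
  moreover have "1 \<le> schf_n d \<eta>" unfolding schf_n_def by (rule max.cobounded2)
  ultimately show ?thesis by blast
qed

lemma symsum:
  fixes g :: "int \<Rightarrow> real"
  assumes "0 \<le> T"
  shows "(\<Sum>i\<in>{-T..T}. g \<bar>i\<bar>) = g 0 + 2 * (\<Sum>i\<in>{1..T}. g i)"
proof -
  obtain n where n: "T = int n" using assms nonneg_eq_int by blast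
  have "(\<Sum>i\<in>{-int n..int n}. g \<bar>i\<bar>) = g 0 + 2 * (\<Sum>i\<in>{1..int n}. g i)"
  proof (induction n)
    case 0
    then show ?case by simp
  next
    case (Suc n)
    have s1: "{-int (Suc n)..int (Suc n)} = insert (-int (Suc n)) (insert (int (Suc n)) {-int n..int n})" by auto
    have s2: "{1..int (Suc n)} = insert (int (Suc n)) {1..int n}" by auto
    show ?case unfolding s1 s2 using Suc by (simp add: add.commute)
  qed
  then show ?thesis using n by simp
qed

definition hh :: "real \<Rightarrow> real" where "hh x = max x (pi/2 - x)"

lemma hh_eta: assumes "0 < d" "d \<le> 2" shows "hh (schf_eta d i) = schf_eta d \<bar>i\<bar>"
proof -
  have D: "schf_deta d > 0" using deta_ge[OF assms] assms by auto
  show ?thesis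
  proof (cases "0 \<le> i")
    case True
    then have "0 \<le> real_of_int i * schf_deta d" using D by simp
    then show ?thesis using True unfolding hh_def schf_eta_def by auto
  next
    case False
    then have "real_of_int i * schf_deta d < 0" using D by (simp add: mult_neg_pos)
    then show ?thesis using False unfolding hh_def schf_eta_def by auto
  qed
qed

definition psi0 :: "real \<Rightarrow> real \<Rightarrow> real" where
  "psi0 d \<eta> = d^2 * real_of_int (schf_m d (hh \<eta>) * schf_n d (hh \<eta>))"

lemma M4_sum:
  assumes d: "0 < d" "d \<le> 2"
  shows "schf_M4 d * d^3 = (\<Sum>i\<in>{-(schf_t d div 2)..schf_t d div 2}. d * psi0 d (schf_eta d i))"
proof -
  define g where "g i = real_of_int (schf_m d (schf_eta d i) * schf_n d (schf_eta d i))" for i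
  have "schf_M4 d = g 0 + 2 * (\<Sum>i\<in>{1..schf_t d div 2}. g i)"
    using d unfolding schf_M4_def g_def by (simp only: if_not_P not_less) 
  also have "\<dots> = (\<Sum>i\<in>{-(schf_t d div 2)..schf_t d div 2}. g \<bar>i\<bar>)"
    using symsum[OF T_nonneg[OF d], of g] by simp
  finally have "schf_M4 d * d^3 = (\<Sum>i\<in>{-(schf_t d div 2)..schf_t d div 2}. d^3 * g \<bar>i\<bar>)"
    by (simp add: sum_distrib_left mult.commute)
  also have "\<dots> = (\<Sum>i\<in>{-(schf_t d div 2)..schf_t d div 2}. d * psi0 d (schf_eta d i))"
    unfolding psi0_def hh_eta[OF d] g_def by (intro sum.cong refl) (simp add: power3_eq_cube power2_eq_square)
  finally show ?thesis .
qed

lemma psi0_bound: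
  assumes d: "0 < d" "d \<le> 2" and e: "0 \<le> \<eta>" "\<eta> \<le> pi/2"
  shows "\<bar>psi0 d \<eta>\<bar> \<le> 2 * pi * (4 * pi + 2)"
proof -
  have h: "0 \<le> hh \<eta>" "hh \<eta> \<le> pi/2" using e unfolding hh_def by (auto simp: max_def)
  note m = m_bound[OF d h] and n = n_bound[OF d h]
  have "psi0 d \<eta> = (d * real_of_int (schf_m d (hh \<eta>))) * (d * real_of_int (schf_n d (hh \<eta>)))"
    unfolding psi0_def by (simp add: power2_eq_square)
  moreover have "0 \<le> d * real_of_int (schf_m d (hh \<eta>))" "0 \<le> d * real_of_int (schf_n d (hh \<eta>))"
    using m n d by auto
  moreover have "(d * real_of_int (schf_m d (hh \<eta>))) * (d * real_of_int (schf_n d (hh \<eta>))) \<le> 2 * pi * (4 * pi + 2)"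
    by (rule mult_mono[OF conjunct2[OF m] conjunct2[OF n]]) (use d n in auto)
  ultimately show ?thesis by simp
qed

lemma sincos_int: "((\<lambda>x. sin x * cos x) has_integral 1/2) {0..pi/2}"
proof -
  have "((\<lambda>x. sin x * cos x) has_integral ((sin (pi/2))^2/2 - (sin 0)^2/2)) {0..pi/2}"
  proof (rule fundamental_theorem_of_calculus)
    show "0 \<le> pi/2" by simp
    fix x :: real
    have "((\<lambda>x. (sin x)^2/2) has_real_derivative (sin x * cos x)) (at x within {0..pi/2})"
      by (auto intro!: derivative_eq_intros simp: power2_eq_square)
    then show "((\<lambda>x. (sin x)^2/2) has_vector_derivative (sin x * cos x)) (at x within {0..pi/2})"
      by (simp add: has_real_derivative_iff_has_vector_derivative)
  qed
  then show ?thesis by simp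
qed

definition L0 :: real where "L0 = 4 * pi^2 / sqrt 3"

lemma base_lim: "((\<lambda>d. schf_M4 d * d^3) \<longlongrightarrow> L0) (at_right 0)"
proof -
  define G where "G x = 8 * pi^2 / sqrt 3 * (sin x * cos x)" for x
  have R: "((\<lambda>d. \<Sum>i\<in>{-(schf_t d div 2)..schf_t d div 2}. d * psi0 d (schf_eta d i)) \<longlongrightarrow> integral {0..pi/2} G) (at_right 0)"
  proof (rule riemann)
    fix x :: real assume x: "0 < x" "x < pi/2"
    let ?F = "at_right (0::real) \<times>\<^sub>F nhds x"
    have D: "filterlim fst (at_right 0) ?F" by (rule filterlim_fst)
    have hx: "0 < hh x" "hh x < pi/2" using x unfolding hh_def by (auto simp: max_def)
    have E: "((\<lambda>p. hh (snd p)) \<longlongrightarrow> hh x) ?F"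
      unfolding hh_def by (intro tendsto_max tendsto_diff tendsto_const filterlim_snd)
    have "((\<lambda>p. (fst p)^2 * real_of_int (schf_m (fst p) (hh (snd p)) * schf_n (fst p) (hh (snd p)))) \<longlongrightarrow>
      8 * pi^2 / sqrt 3 * (sin (hh x) * cos (hh x))) ?F"
      by (rule lim_mn[OF D E hx])
    moreover have "sin (hh x) * cos (hh x) = sin x * cos x"
    proof -
      have s1: "sin (pi/2 - x) = cos x" using cos_sin_eq[of x] by simp
      have s2: "cos (pi/2 - x) = sin x" using sin_cos_eq[of x] by simp
      show ?thesis unfolding hh_def max_def using s1 s2 by (simp add: mult.commute)
    qed
    ultimately show "((\<lambda>p. psi0 (fst p) (snd p)) \<longlongrightarrow> G x) ?F"
      unfolding psi0_def G_def by simp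
  next
    fix d \<eta> :: real assume "0 < d" "d < 1" "0 \<le> \<eta>" "\<eta> \<le> pi/2"
    then show "\<bar>psi0 d \<eta>\<bar> \<le> 2 * pi * (4 * pi + 2)" by (intro psi0_bound) auto
  next
    show "continuous_on {0..pi/2} G" unfolding G_def by (intro continuous_intros)
  qed
  have "integral {0..pi/2} G = 8 * pi^2 / sqrt 3 * (1/2)"
    unfolding G_def using sincos_int by (simp add: integral_mult_right integral_unique)
  also have "\<dots> = L0" unfolding L0_def by simp
  finally have R': "((\<lambda>d. \<Sum>i\<in>{-(schf_t d div 2)..schf_t d div 2}. d * psi0 d (schf_eta d i)) \<longlongrightarrow> L0) (at_right 0)"
    using R by simp
  have "eventually (\<lambda>d. (\<Sum>i\<in>{-(schf_t d div 2)..schf_t d div 2}. d * psi0 d (schf_eta d i)) = schf_M4 d * d^3) (at_right 0)"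
    unfolding eventually_at_right_field by (intro exI[of _ 1]) (auto simp: M4_sum)
  then show ?thesis using R' by (auto intro: Lim_transform_eventually)
qed

lemma base_bound: "\<exists>B. \<forall>x>0. \<bar>schf_M4 x\<bar> * (min x 2)^3 \<le> B"
proof (intro exI allI impI)
  fix x :: real assume x: "0 < x"
  show "\<bar>schf_M4 x\<bar> * (min x 2)^3 \<le> max 8 ((pi/2 + 2) * (2 * pi * (4 * pi + 2)))"
  proof (cases "x \<le> 2")
    case True
    have "\<bar>schf_M4 x\<bar> * (min x 2)^3 = \<bar>schf_M4 x * x^3\<bar>" using True x by (simp add: abs_mult)
    also have "\<dots> \<le> (pi/2 + 2) * (2 * pi * (4 * pi + 2))"
      unfolding M4_sum[OF x True]
    proof (rule sum_bound[OF x True])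
      fix i assume i: "i \<in> {-(schf_t x div 2)..schf_t x div 2}"
      have D: "schf_deta x > 0" using deta_ge[OF x True] x by auto
      have "\<bar>real_of_int i\<bar> * schf_deta x \<le> real_of_int (schf_t x div 2) * schf_deta x"
        using i D by (intro mult_right_mono) auto
      moreover have "\<bar>real_of_int i * schf_deta x\<bar> = \<bar>real_of_int i\<bar> * schf_deta x" using D by (simp add: abs_mult)
      ultimately have "\<bar>real_of_int i * schf_deta x\<bar> \<le> pi/4" using T_upper[OF x True] by linarith
      then have "0 \<le> schf_eta x i" "schf_eta x i \<le> pi/2" unfolding schf_eta_def by auto
      then show "\<bar>psi0 x (schf_eta x i)\<bar> \<le> 2 * pi * (4 * pi + 2)" by (intro psi0_bound x True)
    qed
    finally show ?thesis using max.cobounded2 order_trans by blast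
  next
    case False
    then have "schf_M4 x = 1" unfolding schf_M4_def by simp
    moreover have "min x 2 = 2" using False by simp
    ultimately show ?thesis using max.cobounded1[of 8] by simp
  qed
qed



lemma beta_int:
  fixes n :: nat assumes n: "n \<ge> 2"
  shows "((\<lambda>x. (sin x * cos x)^(2*n-1)) has_integral Beta (real n) (real n) / 2) {0..pi/2}"
proof -
  define f where "f t = t^(n-1) * (1-t)^(n-1)" for t :: real
  have fB: "(f has_integral Beta (real n) (real n)) {0..1}"
  proof (rule has_integral_eq[OF _ has_integral_Beta_real[of "real n" "real n"]])
    fix t :: real assume t: "t \<in> {0..1}"
    have e: "real n - 1 = real (n - 1)" using n by simp
    have p1: "t powr (real n - 1) = t^(n-1)"
    proof (cases "t = 0")
      case True then show ?thesis using n by simp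
    next
      case False
      have "t powr real (n-1) = t^(n-1)" by (rule powr_realpow) (use t False in auto)
      then show ?thesis by (simp only: e)
    qed
    have p2: "(1 - t) powr (real n - 1) = (1 - t)^(n-1)"
    proof (cases "t = 1")
      case True then show ?thesis using n by simp
    next
      case False
      have "(1-t) powr real (n-1) = (1-t)^(n-1)" by (rule powr_realpow) (use t False in auto)
      then show ?thesis by (simp only: e)
    qed
    show "t powr (real n - 1) * (1 - t) powr (real n - 1) = f t" unfolding f_def p1 p2 ..
  qed (use n in auto)
  have sub: "((\<lambda>x. (2 * sin x * cos x) *\<^sub>R f ((sin x)^2)) has_integral integral {(sin 0)^2..(sin (pi/2))^2} f) {0..pi/2}"
  proof (rule has_integral_substitution[where c=0 and d=1])
    show "0 \<le> pi/2" by simp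
    show "(sin 0)^2 \<le> (sin (pi/2))^2" by simp
    show "(\<lambda>x. (sin x)^2) ` {0..pi/2} \<subseteq> {0..1}" by (auto simp: abs_square_le_1)
    show "continuous_on {0..1} f" unfolding f_def by (intro continuous_intros)
    fix x :: real
    show "((\<lambda>x. (sin x)^2) has_field_derivative 2 * sin x * cos x) (at x within {0..pi/2})"
      by (auto intro!: derivative_eq_intros)
  qed
  have iv: "integral {(sin 0)^2..(sin (pi/2))^2} f = Beta (real n) (real n)"
    using fB by (simp add: integral_unique)
  have eq: "(2 * sin x * cos x) *\<^sub>R f ((sin x)^2) = 2 * (sin x * cos x)^(2*n-1)" for x
  proof -
    obtain k where k: "n = Suc k" using n by (cases n) auto
    have e1: "2*n-1 = Suc (2*k)" and e2: "n - 1 = k" using k by simp_all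
    have "(sin x * cos x)^(Suc (2*k)) = (sin x * cos x) * ((sin x * cos x)^2)^k"
      by (simp only: power_Suc power_mult)
    also have "\<dots> = (sin x * cos x) * ((sin x)^2)^k * ((cos x)^2)^k"
      by (simp only: power_mult_distrib mult.assoc)
    finally have "(sin x * cos x)^(2*n-1) = (sin x * cos x) * ((sin x)^2)^(n-1) * ((cos x)^2)^(n-1)"
      unfolding e1 e2 .
    moreover have "1 - (sin x)^2 = (cos x)^2" by (simp add: cos_squared_eq)
    ultimately show ?thesis unfolding f_def by simp
  qed
  have "((\<lambda>x. 2 * (sin x * cos x)^(2*n-1)) has_integral Beta (real n) (real n)) {0..pi/2}"
    using sub unfolding iv eq .
  then have "((\<lambda>x. (1/2) * (2 * (sin x * cos x)^(2*n-1))) has_integral (1/2) * Beta (real n) (real n)) {0..pi/2}"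
    by (rule has_integral_mult_right)
  then show ?thesis by simp
qed

lemma eta_in:
  assumes x: "0 < x" "x \<le> 2" and i: "i \<in> {-(schf_t x div 2)..schf_t x div 2}"
  shows "0 \<le> schf_eta x i \<and> schf_eta x i \<le> pi/2"
proof -
  have D: "schf_deta x > 0" using deta_ge[OF x] x by auto
  have "\<bar>real_of_int i\<bar> * schf_deta x \<le> real_of_int (schf_t x div 2) * schf_deta x"
    using i D by (intro mult_right_mono) auto
  moreover have "\<bar>real_of_int i * schf_deta x\<bar> = \<bar>real_of_int i\<bar> * schf_deta x" using D by (simp add: abs_mult)
  ultimately have "\<bar>real_of_int i * schf_deta x\<bar> \<le> pi/4" using T_upper[OF x] by linarith
  then show ?thesis unfolding schf_eta_def by auto
qed

definition NN :: "nat \<Rightarrow> nat" where "NN j = 2^(j+2)"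

primrec Lr :: "nat \<Rightarrow> real" where
  "Lr 0 = L0"
| "Lr (Suc j) = (Lr j)^2 * Beta (real (2^(j+1))) (real (2^(j+1))) / 2"

lemma rec_main:
  "((\<lambda>x. schf_Mrec j x * x^(NN j - 1)) \<longlongrightarrow> Lr j) (at_right 0) \<and>
   (\<exists>B. \<forall>x>0. \<bar>schf_Mrec j x\<bar> * (min x 2)^(NN j - 1) \<le> B)"
proof (induction j)
  case 0
  have "NN 0 - 1 = 3" unfolding NN_def by simp
  then show ?case using base_lim base_bound by simp
next
  case (Suc j)
  define p where "p = NN j - 1"
  have pS: "NN (Suc j) - 1 = 2 * p + 1"
  proof -
    have a: "(2::nat)^(Suc j + 2) = 8 * 2^j" "(2::nat)^(j+2) = 4 * 2^j" by simp_all
    have "(1::nat) \<le> 2^j" by simp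
    then show ?thesis unfolding p_def NN_def a by linarith
  qed
  have IHl: "((\<lambda>x. schf_Mrec j x * x^p) \<longlongrightarrow> Lr j) (at_right 0)" using Suc.IH unfolding p_def by simp
  obtain B where B: "\<And>x. x > 0 \<Longrightarrow> \<bar>schf_Mrec j x\<bar> * (min x 2)^p \<le> B"
    using Suc.IH unfolding p_def by blast
  define B' where "B' = max B (2^p)"
  define Af where "Af d \<eta> = (if cos \<eta> = 0 then 1 else schf_Mrec j (d / cos \<eta>))" for d \<eta>
  define Bf where "Bf d \<eta> = (if sin \<eta> = 0 then 1 else schf_Mrec j (d / sin \<eta>))" for d \<eta>
  define \<psi> where "\<psi> d \<eta> = d^(2*p) * Af d \<eta> * Bf d \<eta>" for d \<eta>
  have gen_bound: "\<bar>d^p * (if c = 0 then 1 else schf_Mrec j (d / c))\<bar> \<le> B'"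
    if d: "0 < d" "d \<le> 2" and c: "0 \<le> c" "c \<le> 1" for d c
  proof (cases "c = 0")
    case True
    have "d^p \<le> 2^p" using d by (intro power_mono) auto
    then show ?thesis using True d unfolding B'_def by auto
  next
    case False
    then have c0: "c > 0" using c by auto
    define u where "u = d / c"
    have u: "u > 0" "d \<le> u" using c0 d c unfolding u_def by (auto simp: field_simps intro: mult_left_le_one_le)
    have "d \<le> min u 2" using u d by simp
    then have dp: "d^p \<le> (min u 2)^p" using d by (intro power_mono) auto
    have "\<bar>d^p * schf_Mrec j u\<bar> = d^p * \<bar>schf_Mrec j u\<bar>" using d by (simp add: abs_mult)
    also have "\<dots> \<le> (min u 2)^p * \<bar>schf_Mrec j u\<bar>" using dp by (intro mult_right_mono) auto
    also have "\<dots> \<le> B" using B[OF u(1)] by (simp add: mult.commute)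
    also have "\<dots> \<le> B'" unfolding B'_def by simp
    finally show ?thesis using False unfolding u_def by simp
  qed
  have psi_bound: "\<bar>\<psi> d \<eta>\<bar> \<le> B' * B'" if d: "0 < d" "d \<le> 2" and e: "0 \<le> \<eta>" "\<eta> \<le> pi/2" for d \<eta>
  proof -
    have c: "0 \<le> cos \<eta>" "cos \<eta> \<le> 1" using e by (auto intro: cos_ge_zero)
    have s: "0 \<le> sin \<eta>" "sin \<eta> \<le> 1" using e by (auto intro: sin_ge_zero)
    have a1: "\<bar>d^p * Af d \<eta>\<bar> \<le> B'" unfolding Af_def by (rule gen_bound[OF d c])
    have a2: "\<bar>d^p * Bf d \<eta>\<bar> \<le> B'" unfolding Bf_def by (rule gen_bound[OF d s])
    have dd: "d^(2*p) = d^p * d^p" by (simp only: mult_2 power_add)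
    have "\<psi> d \<eta> = (d^p * Af d \<eta>) * (d^p * Bf d \<eta>)" unfolding \<psi>_def dd by (simp only: mult_ac)
    then have "\<bar>\<psi> d \<eta>\<bar> = \<bar>d^p * Af d \<eta>\<bar> * \<bar>d^p * Bf d \<eta>\<bar>" by (simp add: abs_mult)
    also have "\<dots> \<le> B' * B'" using a1 a2 by (intro mult_mono) auto
    finally show ?thesis .
  qed
  have ident: "schf_Mrec (Suc j) d * d^(2*p+1) = (\<Sum>i\<in>{-(schf_t d div 2)..schf_t d div 2}. d * \<psi> d (schf_eta d i))"
    if d: "0 < d" "d \<le> 2" for d
  proof -
    have "schf_Mrec (Suc j) d = (\<Sum>i\<in>{-(schf_t d div 2)..schf_t d div 2}. Af d (schf_eta d i) * Bf d (schf_eta d i))"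
      using d unfolding Af_def Bf_def by simp
    have dd: "d^(2*p+1) = d * d^(2*p)" by simp
    show ?thesis unfolding \<open>schf_Mrec (Suc j) d = _\<close> dd sum_distrib_right \<psi>_def
      by (intro sum.cong refl) (simp only: mult_ac)
  qed

  define G where "G x = (Lr j)^2 * (sin x * cos x)^p" for x
  have R: "((\<lambda>d. \<Sum>i\<in>{-(schf_t d div 2)..schf_t d div 2}. d * \<psi> d (schf_eta d i)) \<longlongrightarrow> integral {0..pi/2} G) (at_right 0)"
  proof (rule riemann)
    fix x :: real assume x: "0 < x" "x < pi/2"
    let ?F = "at_right (0::real) \<times>\<^sub>F nhds x"
    have cx: "cos x > 0" using x by (intro cos_gt_zero_pi) auto
    have sx: "sin x > 0" using x by (intro sin_gt_zero) auto
    have fs: "filterlim fst (at_right 0) ?F" by (rule filterlim_fst)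
    then have f0: "(fst \<longlongrightarrow> 0) ?F" and fp: "eventually (\<lambda>q. fst q > 0) ?F" unfolding atr_iff by auto
    have cE: "((\<lambda>q. cos (snd q)) \<longlongrightarrow> cos x) ?F" by (rule isCont_tendsto_compose[OF isCont_cos filterlim_snd])
    have sE: "((\<lambda>q. sin (snd q)) \<longlongrightarrow> sin x) ?F" by (rule isCont_tendsto_compose[OF isCont_sin filterlim_snd])
    have cp: "eventually (\<lambda>q. cos (snd q) > 0) ?F" using order_tendstoD(1)[OF cE cx] .
    have sp: "eventually (\<lambda>q. sin (snd q) > 0) ?F" using order_tendstoD(1)[OF sE sx] .
    define u where "u q = fst q / cos (snd q)" for q :: "real \<times> real"
    define v where "v q = fst q / sin (snd q)" for q :: "real \<times> real"
    have u: "filterlim u (at_right 0) ?F" unfolding atr_iff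
    proof
      show "(u \<longlongrightarrow> 0) ?F" unfolding u_def using tendsto_divide[OF f0 cE] cx by simp
      show "eventually (\<lambda>q. u q > 0) ?F" using fp cp by eventually_elim (simp add: u_def)
    qed
    have v: "filterlim v (at_right 0) ?F" unfolding atr_iff
    proof
      show "(v \<longlongrightarrow> 0) ?F" unfolding v_def using tendsto_divide[OF f0 sE] sx by simp
      show "eventually (\<lambda>q. v q > 0) ?F" using fp sp by eventually_elim (simp add: v_def)
    qed
    have lu: "((\<lambda>q. schf_Mrec j (u q) * (u q)^p) \<longlongrightarrow> Lr j) ?F" by (rule filterlim_compose[OF IHl u])
    have lv: "((\<lambda>q. schf_Mrec j (v q) * (v q)^p) \<longlongrightarrow> Lr j) ?F" by (rule filterlim_compose[OF IHl v])
    have "((\<lambda>q. (schf_Mrec j (u q) * (u q)^p) * (schf_Mrec j (v q) * (v q)^p) * (sin (snd q) * cos (snd q))^p)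
       \<longlongrightarrow> Lr j * Lr j * (sin x * cos x)^p) ?F"
      by (intro tendsto_mult tendsto_power lu lv sE cE)
    moreover have "eventually (\<lambda>q. (schf_Mrec j (u q) * (u q)^p) * (schf_Mrec j (v q) * (v q)^p) * (sin (snd q) * cos (snd q))^p
       = \<psi> (fst q) (snd q)) ?F"
      using cp sp
    proof eventually_elim
      case (elim q)
      define d where "d = fst q"
      define c where "c = cos (snd q)"
      define s where "s = sin (snd q)"
      have c0: "c > 0" "s > 0" using elim unfolding c_def s_def by auto
      have "(d / c) * (d / s) * (s * c) = d * d" using c0 by (simp add: field_simps)
      then have "(d / c)^p * (d / s)^p * (s * c)^p = (d * d)^p" by (metis power_mult_distrib)
      also have "\<dots> = d^(2*p)" by (simp add: power_mult power2_eq_square)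
      finally have key: "(d / c)^p * (d / s)^p * (s * c)^p = d^(2*p)" .
      have "\<psi> (fst q) (snd q) = d^(2*p) * schf_Mrec j (d / c) * schf_Mrec j (d / s)"
        unfolding \<psi>_def Af_def Bf_def d_def c_def s_def using c0 unfolding c_def s_def by simp
      also have "\<dots> = (schf_Mrec j (d / c) * (d / c)^p) * (schf_Mrec j (d / s) * (d / s)^p) * (s * c)^p"
        unfolding key[symmetric] by (simp add: mult_ac)
      finally show ?case unfolding u_def v_def d_def c_def s_def by simp
    qed
    ultimately have "((\<lambda>q. \<psi> (fst q) (snd q)) \<longlongrightarrow> Lr j * Lr j * (sin x * cos x)^p) ?F"
      by (rule Lim_transform_eventually)
    then show "((\<lambda>q. \<psi> (fst q) (snd q)) \<longlongrightarrow> G x) ?F" unfolding G_def by (simp add: power2_eq_square)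
  next
    fix d \<eta> :: real assume "0 < d" "d < 1" "0 \<le> \<eta>" "\<eta> \<le> pi/2"
    then show "\<bar>\<psi> d \<eta>\<bar> \<le> B' * B'" by (intro psi_bound) auto
  next
    show "continuous_on {0..pi/2} G" unfolding G_def by (intro continuous_intros)
  qed
  have n2: "2 \<le> (2::nat)^(j+1)" by (simp add: self_le_power)
  have pe: "2 * 2^(j+1) - 1 = p" unfolding p_def NN_def by simp
  have "integral {0..pi/2} G = (Lr j)^2 * (Beta (real (2^(j+1))) (real (2^(j+1))) / 2)"
    unfolding G_def using beta_int[OF n2] unfolding pe by (simp add: integral_mult_right integral_unique)
  also have "\<dots> = Lr (Suc j)" by simp
  finally have eqI: "integral {0..pi/2} G = Lr (Suc j)" .
  have R': "((\<lambda>d. \<Sum>i\<in>{-(schf_t d div 2)..schf_t d div 2}. d * \<psi> d (schf_eta d i)) \<longlongrightarrow> Lr (Suc j)) (at_right 0)"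
    using R unfolding eqI .
  have ev: "eventually (\<lambda>d. (\<Sum>i\<in>{-(schf_t d div 2)..schf_t d div 2}. d * \<psi> d (schf_eta d i)) = schf_Mrec (Suc j) d * d^(NN (Suc j) - 1)) (at_right 0)"
    unfolding eventually_at_right_field pS
  proof (intro exI[of _ 1] conjI allI impI)
    show "(0::real) < 1" by simp
    fix y :: real assume y: "0 < y" "y < 1"
    show "(\<Sum>i\<in>{-(schf_t y div 2)..schf_t y div 2}. y * \<psi> y (schf_eta y i)) = schf_Mrec (Suc j) y * y^(2*p+1)"
      using ident[of y] y by (simp del: schf_Mrec.simps)
  qed
  have lim: "((\<lambda>x. schf_Mrec (Suc j) x * x^(NN (Suc j) - 1)) \<longlongrightarrow> Lr (Suc j)) (at_right 0)"
    using Lim_transform_eventually[OF R' ev] .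
  have bnd: "\<bar>schf_Mrec (Suc j) x\<bar> * (min x 2)^(NN (Suc j) - 1) \<le> max (2^(2*p+1)) ((pi/2 + 2) * (B' * B'))"
    if x: "x > 0" for x
  proof (cases "x \<le> 2")
    case True
    have "\<bar>schf_Mrec (Suc j) x\<bar> * (min x 2)^(NN (Suc j) - 1) = \<bar>schf_Mrec (Suc j) x * x^(2*p+1)\<bar>"
      using True x unfolding pS by (simp add: abs_mult)
    also have "\<dots> \<le> (pi/2 + 2) * (B' * B')"
      unfolding ident[OF x True]
    proof (rule sum_bound[OF x True])
      fix i assume i: "i \<in> {-(schf_t x div 2)..schf_t x div 2}"
      show "\<bar>\<psi> x (schf_eta x i)\<bar> \<le> B' * B'" using eta_in[OF x True i] by (intro psi_bound x True) auto
    qed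
    finally show ?thesis using max.cobounded2 order_trans by blast
  next
    case False
    then have "schf_Mrec (Suc j) x = 1" by simp
    moreover have "min x 2 = 2" using False by simp
    ultimately show ?thesis unfolding pS using max.cobounded1 by simp
  qed
  have "\<forall>x>0. \<bar>schf_Mrec (Suc j) x\<bar> * (min x 2)^(NN (Suc j) - 1) \<le> max (2^(2*p+1)) ((pi/2 + 2) * (B' * B'))"
    using bnd by simp
  then show ?case using lim by (intro conjI exI)
qed



lemma sphere2:
  fixes n :: nat assumes n: "n \<ge> 1"
  shows "sphere_area (2*n) = 2 * pi^n / Gamma (real n)"
proof -
  have g: "Gamma (real n + 1) = real n * Gamma (real n)"
    using n by (intro Gamma_plus1) (auto simp: of_nat_in_nonpos_Ints_iff)
  have "sphere_area (2*n) = real (2*n) * pi powr (real n) / Gamma (1 + real n)"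
    unfolding sphere_area_def by simp
  also have "\<dots> = 2 * real n * pi^n / (real n * Gamma (real n))"
    using g by (simp add: powr_realpow add.commute)
  also have "\<dots> = 2 * pi^n / Gamma (real n)" using n by simp
  finally show ?thesis .
qed

definition Dl :: "nat \<Rightarrow> real" where
  "Dl j = 2 powr (1 - 3 * 2^j) * 3 powr (- (2^j / 2))"

lemma Dl_step: "Dl (Suc j) = Dl j * Dl j / 2"
proof -
  have p2: "(2::real) powr (1 - 3 * 2^j) * 2 powr (1 - 3 * 2^j) = 2 powr ((1 - 3 * 2^j) + (1 - 3 * 2^j))"
    by (simp only: powr_add)
  have p3: "(3::real) powr (- (2^j / 2)) * 3 powr (- (2^j / 2)) = 3 powr (- (2^j / 2) + - (2^j / 2))"
    by (simp only: powr_add)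
  have "Dl j * Dl j = 2 powr ((1 - 3 * 2^j) + (1 - 3 * 2^j)) * 3 powr (- (2^j / 2) + - (2^j / 2))"
    unfolding Dl_def p2[symmetric] p3[symmetric] by (simp only: mult_ac)
  also have "\<dots> / 2 = 2 powr ((1 - 3 * 2^j) + (1 - 3 * 2^j) - 1) * 3 powr (- (2^j / 2) + - (2^j / 2))"
    by (simp add: powr_diff)
  also have "\<dots> = Dl (Suc j)" unfolding Dl_def by (simp add: algebra_simps)
  finally show ?thesis by simp
qed

lemma Lr_closed: "Lr j = sphere_area (2^(j+2)) * 2^(2^(j+2) - 1) * Dl j"
proof (induction j)
  case 0
  have g2: "Gamma (1 + real 1) = fact 1" by (rule Gamma_fact)
  have s4: "sphere_area 4 = 2 * pi^2" using sphere2[of 2] g2 by simp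
  have d0: "Dl 0 = 1/4 * (1 / sqrt 3)"
  proof -
    have a0: "(2::real) powr (real 2) = 2^2" by (rule powr_realpow) simp
    have "(2::real) powr (1 - 3) = 2 powr (- real 2)" by simp
    also have "\<dots> = inverse (2 powr (real 2))" by (rule powr_minus)
    finally have a: "(2::real) powr (1 - 3) = 1/4" unfolding a0 by simp
    have b0: "(3::real) powr (1/2) = sqrt 3" by (rule powr_half_sqrt) simp
    have "(3::real) powr (- (1/2)) = inverse (3 powr (1/2))" by (rule powr_minus)
    then have b: "(3::real) powr (- (1/2)) = 1 / sqrt 3" unfolding b0 by (simp add: inverse_eq_divide)
    have a': "(2::real) powr (-2) = 1/4" using a by simp
    have "Dl 0 = 2 powr (-2) * 3 powr (- (1/2))" unfolding Dl_def by simp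
    then show ?thesis unfolding a' b by simp
  qed
  show ?case unfolding Lr.simps L0_def d0 by (simp add: s4 power2_eq_square)
next
  case (Suc j)
  define n :: nat where "n = 2^(j+1)"
  have n1: "n \<ge> 1" unfolding n_def by simp
  have e1: "(2::nat)^(j+2) = 2*n" and e2: "(2::nat)^(Suc j + 2) = 2*(2*n)" unfolding n_def by simp_all
  define P :: real where "P = 2^(2*n-1)"
  have P2: "(2::real)^(2*(2*n) - 1) = 2 * P * P"
  proof -
    have "2*(2*n) - 1 = Suc ((2*n-1) + (2*n-1))" using n1 by simp
    then show ?thesis unfolding P_def by (simp only: power_Suc power_add)
  qed
  have S1: "sphere_area (2*n) = 2 * pi^n / Gamma (real n)" by (rule sphere2[OF n1])
  have S2: "sphere_area (2*(2*n)) = 2 * pi^(2*n) / Gamma (real (2*n))" by (rule sphere2) (use n1 in simp)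
  have B: "Beta (real n) (real n) = Gamma (real n) * Gamma (real n) / Gamma (real (2*n))"
  proof -
    have "real n + real n = real (2*n)" by simp
    then show ?thesis unfolding Beta_def by simp
  qed
  have gp: "Gamma (real n) > 0" "Gamma (real (2*n)) > 0" using n1 by auto
  have "Lr (Suc j) = (Lr j)^2 * Beta (real n) (real n) / 2" unfolding n_def by simp
  also have "\<dots> = (2 * pi^n / Gamma (real n) * P * Dl j)^2 * (Gamma (real n) * Gamma (real n) / Gamma (real (2*n))) / 2"
    unfolding Suc.IH e1 S1 B P_def ..
  also have "\<dots> = 2 * pi^(2*n) / Gamma (real (2*n)) * (2 * P * P) * (Dl j * Dl j / 2)"
  proof -
    have pp: "pi^(2*n) = pi^n * pi^n" by (simp only: mult_2 power_add)
    show ?thesis unfolding pp using gp by (simp add: field_simps power2_eq_square)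
  qed
  also have "\<dots> = sphere_area (2^(Suc j + 2)) * 2^(2^(Suc j + 2) - 1) * Dl (Suc j)"
    unfolding e2 S2 P2 Dl_step ..
  finally show ?case .
qed

theorem corollary2:
  fixes k :: nat
  assumes "k \<ge> 2"
  shows "((\<lambda>d::real. schf_M k d / sphere_area (2 ^ k) * (d / 2) ^ (2 ^ k - 1))
           \<longlongrightarrow> 2 powr (1 - 3 * 2 powr (real k - 2)) * 3 powr (- (2 powr (real k - 3))))
         (at_right 0)"
proof -
  define j where "j = k - 2"
  have kj: "k = j + 2" unfolding j_def using assms by simp
  define S where "S = sphere_area (2^k)"
  define N :: nat where "N = 2^k - 1"
  have S: "S > 0"
  proof -
    have "S = 2 * pi^(2^(j+1)) / Gamma (real (2^(j+1)))"
      unfolding S_def kj using sphere2[of "2^(j+1)"] by (simp add: power_add)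
    moreover have "Gamma (real ((2::nat)^(j+1))) > 0" by simp
    ultimately show ?thesis by simp
  qed
  have NN: "NN j - 1 = N" unfolding NN_def N_def kj ..
  have lim: "((\<lambda>x. schf_Mrec j x * x^N) \<longlongrightarrow> Lr j) (at_right 0)" using rec_main[of j] unfolding NN by simp
  then have "((\<lambda>x. schf_Mrec j x * x^N / (S * 2^N)) \<longlongrightarrow> Lr j / (S * 2^N)) (at_right 0)"
    by (intro tendsto_divide tendsto_const) (use S in auto)
  moreover have "(\<lambda>x. schf_Mrec j x * x^N / (S * 2^N)) = (\<lambda>d. schf_M k d / S * (d / 2)^N)"
    unfolding schf_M_def by (auto simp: kj power_divide)
  moreover have "Lr j / (S * 2^N) = Dl j"
    unfolding Lr_closed S_def N_def kj using S unfolding S_def kj by simp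
  moreover have "Dl j = 2 powr (1 - 3 * 2 powr (real k - 2)) * 3 powr (- (2 powr (real k - 3)))"
  proof -
    have a: "(2::real) powr (real k - 2) = 2^j" unfolding kj by (simp add: powr_realpow)
    have b: "(2::real) powr (real k - 3) = 2^j / 2"
    proof -
      have "real k - 3 = real j - 1" unfolding kj by simp
      then show ?thesis by (simp add: powr_diff powr_realpow)
    qed
    show ?thesis unfolding a b Dl_def ..
  qed
  ultimately show ?thesis unfolding S_def N_def by simp
qed


end
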